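(* Let $0<\delta<1$, $t>1$, $\lambda_c:=1/(t^{1-\delta}-1)$, $\lambda_c\le\lambda\le t^{1-\delta}-1$, write $\lambda=\lambda_c(1+\Lambda)$ and $\omega:=\sqrt{\frac{\lambda_c t}{2}}\frac{\ln(1+\Lambda)}{1+\lambda_c}$. Let $a=a(t)$ satisfy $t^{-\delta/2}\ll a\ll t^{-\delta/3}$, set $k:=t^{\delta-1}(1-a)$, and let $$J_{B1}(t;\lambda):=\int_{1-t^{\delta-1}}^{1-k}(1-z)^{-1/2}{\rm e}^{{\rm i} tF(z;\lambda)}\,{\rm d} z.$$ Then, as $t\to\infty$, $$J_{B1}(t;\lambda)=\exp\!\big({\rm i} tF(1-t^{\delta-1};\lambda)-{\rm i}\omega^2\big)\,t^{-1/2}\sqrt{\frac{2}{1+\lambda_c}}\left(\int_\omega^{\omega+a\sqrt{\lambda_c t/2}}{\rm e}^{{\rm i}\xi^2}\,{\rm d}\xi\right)+{\cal O}\!\left(t^{-\frac12+\frac{3\delta}{2}}a^4\right).$$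
   Context: $F(z;\lambda):=(1-z)\ln(1-z)+z\ln z+z\ln\lambda$ with branch cuts $(-\infty,0]$ and $[1,\infty)$; the integral defining $J_{B1}$ is along the real segment. $f\ll g$ means $f/g\to0$ as $t\to\infty$. *)

theory Defs
  imports "HOL-Analysis.Analysis"
begin

definition F :: "complex \<Rightarrow> real \<Rightarrow> complex" where
  "F z lam = (1 - z) * Ln (1 - z) + z * Ln z + z * Ln (complex_of_real lam)"

definition lam_c :: "real \<Rightarrow> real \<Rightarrow> real" where
  "lam_c \<delta> t = 1 / (t powr (1 - \<delta>) - 1)"

definition Lam :: "real \<Rightarrow> real \<Rightarrow> real \<Rightarrow> real" where
  "Lam \<delta> t lam = lam / lam_c \<delta> t - 1"

definition omega :: "real \<Rightarrow> real \<Rightarrow> real \<Rightarrow> real" where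
  "omega \<delta> t lam = sqrt (lam_c \<delta> t * t / 2) * ln (1 + Lam \<delta> t lam) / (1 + lam_c \<delta> t)"

definition kk :: "real \<Rightarrow> real \<Rightarrow> real \<Rightarrow> real" where
  "kk \<delta> t a = t powr (\<delta> - 1) * (1 - a)"

definition J_B1 :: "real \<Rightarrow> real \<Rightarrow> real \<Rightarrow> real \<Rightarrow> complex" where
  "J_B1 \<delta> a t lam = integral {1 - t powr (\<delta> - 1) .. 1 - kk \<delta> t a}
     (\<lambda>z. complex_of_real ((1 - z) powr (-1/2)) *
          exp (\<i> * complex_of_real t * F (complex_of_real z) lam))"

end

theory Submission
  imports Defs "HOL-Probability.Characteristic_Functions"
begin

lemma taylorG:
  fixes T lam x :: real
  assumes T: "T \<ge> 2" and lam: "lam > 0" and x0: "1 - 1/T \<le> x" and x1: "x \<le> 1 - 1/(2*T)"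
  shows "\<bar>((1-x)*ln(1-x) + x*ln x + x*ln lam) - ((1/T)*ln(1/T) + (1-1/T)*ln(1-1/T) + (1-1/T)*ln lam)
      - (ln (1-1/T) - ln (1/T) + ln lam) * (x - (1-1/T)) - (T^2/(T-1))/2 * (x - (1-1/T))^2\<bar>
      \<le> 2 * T^2 * (x - (1-1/T))^3"
proof -
  define z0 where "z0 = 1 - 1/T"
  define G where "G = (\<lambda>x::real. (1-x)*ln(1-x) + x*ln x + x*ln lam)"
  define G1 where "G1 = (\<lambda>x::real. ln x - ln (1-x) + ln lam)"
  define G2 where "G2 = (\<lambda>x::real. 1/x + 1/(1-x))"
  define G3 where "G3 = (\<lambda>x::real. -1/x^2 + 1/(1-x)^2)"
  define D where "D = (\<lambda>m::nat. if m = 0 then G else if m = 1 then G1 else if m = 2 then G2 else G3)"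
  have Tp: "T > 0" using T by simp
  have z0h: "1/2 \<le> z0" using T unfolding z0_def by (simp add: field_simps)
  have z0lt: "z0 < 1 - 1/(2*T)" using T unfolding z0_def by (simp add: field_simps)
  have rng: "0 < y \<and> y < 1" if "z0 \<le> y" "y \<le> 1 - 1/(2*T)" for y
    using that z0h Tp by (smt (verit) divide_pos_pos)
  have DER: "\<forall>(m::nat) y. m < 3 \<and> z0 \<le> y \<and> y \<le> 1 - 1/(2*T) \<longrightarrow> DERIV (D m) y :> D (Suc m) y"
  proof (intro allI impI)
    fix m :: nat and y :: real assume h: "m < 3 \<and> z0 \<le> y \<and> y \<le> 1 - 1/(2*T)"
    then have y: "0 < y" "y < 1" using rng by auto
    have "m = 0 \<or> m = 1 \<or> m = 2" using h by auto
    then show "DERIV (D m) y :> D (Suc m) y"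
    proof (elim disjE)
      assume "m = 0"
      then show ?thesis unfolding D_def G_def G1_def using y
        by (auto intro!: derivative_eq_intros)
    next
      assume "m = 1"
      then show ?thesis unfolding D_def G1_def G2_def using y
        by (auto intro!: derivative_eq_intros simp: field_simps)
    next
      assume "m = 2"
      then show ?thesis unfolding D_def G2_def G3_def using y
        by (auto intro!: derivative_eq_intros simp: field_simps power2_eq_square)
    qed
  qed
  have G3b: "\<bar>G3 y\<bar> \<le> 12 * T^2" if "z0 \<le> y" "y \<le> 1 - 1/(2*T)" for y
  proof -
    have y: "1/2 \<le> y" "1/(2*T) \<le> 1 - y" using that z0h by auto
    have a1: "1/y^2 \<le> 4"
    proof -
      have "1/y^2 \<le> 1/(1/2)^2" using y by (intro divide_left_mono power_mono) auto
      then show ?thesis by (simp add: power2_eq_square)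
    qed
    have a2: "1/(1-y)^2 \<le> 4*T^2"
    proof -
      have "0 < 1/(2*T)" using Tp by simp
      then have "0 < 1 - y" using y by linarith
      then have "1/(1-y)^2 \<le> 1/(1/(2*T))^2" using y Tp by (intro divide_left_mono power_mono) auto
      then show ?thesis by (simp add: power2_eq_square)
    qed
    have "\<bar>G3 y\<bar> \<le> 1/y^2 + 1/(1-y)^2" unfolding G3_def
      using zero_le_power2[of "1-y"] zero_le_power2[of y] by (simp add: abs_le_iff)
    also have "\<dots> \<le> 4 + 4*T^2" using a1 a2 by simp
    also have "\<dots> \<le> 12*T^2" proof -
      have "4 \<le> T^2" using T power_mono[of 2 T 2] by simp
      then show ?thesis by simp
    qed
    finally show ?thesis .
  qed
  have key: "\<bar>G x - G z0 - G1 z0 * (x - z0) - G2 z0 / 2 * (x - z0)^2\<bar> \<le> 2 * T^2 * (x - z0)^3"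
  proof (cases "x = z0")
    case True then show ?thesis by simp
  next
    case False
    from Taylor[of 3 D G z0 "1 - 1/(2*T)" z0 x, OF _ _ DER] False x0 x1 z0lt
    obtain y where y: "z0 < y" "y < x"
      and eq: "G x = (\<Sum>m<3. (D m z0 / fact m) * (x - z0)^m) + (D 3 y / fact 3) * (x - z0)^3"
      unfolding z0_def D_def by (auto split: if_splits)
    have s: "(\<Sum>m<3. (D m z0 / fact m) * (x - z0)^m) = G z0 + G1 z0 * (x - z0) + G2 z0 / 2 * (x - z0)^2"
      by (simp add: eval_nat_numeral D_def)
    have "\<bar>G x - G z0 - G1 z0 * (x - z0) - G2 z0 / 2 * (x - z0)^2\<bar> = \<bar>G3 y\<bar> / 6 * (x - z0)^3"
      using eq s y by (simp add: D_def eval_nat_numeral abs_mult)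
    also have "\<dots> \<le> (12 * T^2) / 6 * (x - z0)^3"
      using G3b[of y] y x1 by (intro mult_right_mono divide_right_mono) auto
    finally show ?thesis by simp
  qed
  have e1: "G2 z0 = T^2/(T-1)" unfolding G2_def z0_def using T by (simp add: field_simps power2_eq_square)
  have e0: "G z0 = (1/T)*ln(1/T) + (1-1/T)*ln(1-1/T) + (1-1/T)*ln lam" unfolding G_def z0_def by simp
  show ?thesis using key unfolding e1 e0 unfolding G_def G1_def z0_def by simp
qed

lemma F_real:
  assumes "0 < y" "y < 1" "lam > 0"
  shows "F (complex_of_real y) lam = complex_of_real ((1-y)*ln(1-y) + y*ln y + y*ln lam)"
proof -
  have "1 - complex_of_real y = complex_of_real (1 - y)" by simp
  then show ?thesis unfolding F_def using assms
    by (simp only: Ln_of_real) (simp add: Ln_of_real)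
qed

lemma amp:
  fixes u :: real assumes "0 \<le> u" "u \<le> 1/2"
  shows "1/sqrt(1-u) \<le> 1+u"
proof -
  have "1 \<le> (1+u)^2*(1-u)"
  proof -
    have "(1+u)^2*(1-u) = 1 + u*(1 - u - u^2)" by (simp add: algebra_simps power2_eq_square)
    moreover have "0 \<le> u*(1 - u - u^2)"
    proof -
      have "u*u \<le> (1/2)*(1/2)" using assms by (intro mult_mono) auto
      then show ?thesis using assms by (intro mult_nonneg_nonneg) (auto simp: power2_eq_square)
    qed
    ultimately show ?thesis by simp
  qed
  then have "1 \<le> sqrt ((1+u)^2*(1-u))" by simp
  also have "\<dots> = (1+u) * sqrt(1-u)" using assms by (simp add: real_sqrt_mult)
  finally have "1 \<le> (1+u) * sqrt(1-u)" .
  moreover have "0 < sqrt(1-u)" using assms by simp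
  ultimately show ?thesis by (simp add: divide_le_eq mult.commute)
qed

lemma expdiff:
  fixes r s A B :: real
  shows "cmod (complex_of_real r * exp (\<i> * complex_of_real A) - complex_of_real s * exp (\<i> * complex_of_real B))
     \<le> \<bar>r - s\<bar> + \<bar>s\<bar> * \<bar>A - B\<bar>"
proof -
  have e: "cmod (exp (\<i> * complex_of_real A) - exp (\<i> * complex_of_real B)) \<le> \<bar>A - B\<bar>"
  proof -
    have "exp (\<i> * complex_of_real A) - exp (\<i> * complex_of_real B)
        = exp (\<i> * complex_of_real B) * (exp (\<i> * complex_of_real (A - B)) - 1)"
      by (simp add: algebra_simps flip: exp_add)
    then have "cmod (exp (\<i> * complex_of_real A) - exp (\<i> * complex_of_real B))
        = cmod (exp (\<i> * complex_of_real (A - B)) - 1)"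
      by (simp add: norm_mult)
    also have "\<dots> \<le> \<bar>A - B\<bar>" using iexp_approx1[of "A - B" 0] by simp
    finally show ?thesis .
  qed
  have "complex_of_real r * exp (\<i> * complex_of_real A) - complex_of_real s * exp (\<i> * complex_of_real B)
     = complex_of_real (r - s) * exp (\<i> * complex_of_real A)
       + complex_of_real s * (exp (\<i> * complex_of_real A) - exp (\<i> * complex_of_real B))"
    by (simp add: algebra_simps)
  also have "cmod \<dots> \<le> cmod (complex_of_real (r - s) * exp (\<i> * complex_of_real A))
       + cmod (complex_of_real s * (exp (\<i> * complex_of_real A) - exp (\<i> * complex_of_real B)))"
    by (rule norm_triangle_ineq)
  also have "\<dots> \<le> \<bar>r - s\<bar> + \<bar>s\<bar> * \<bar>A - B\<bar>"
  proof -
    have "cmod (complex_of_real (r - s) * exp (\<i> * complex_of_real A)) = \<bar>r - s\<bar>"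
      unfolding norm_mult by (simp del: of_real_diff add: of_real_diff[symmetric])
    moreover have "cmod (complex_of_real s * (exp (\<i> * complex_of_real A) - exp (\<i> * complex_of_real B)))
       \<le> \<bar>s\<bar> * \<bar>A - B\<bar>"
      unfolding norm_mult using e by (simp add: mult_left_mono)
    ultimately show ?thesis by linarith
  qed
  finally show ?thesis .
qed

lemma core:
  fixes T t lam a :: real
  assumes T: "T \<ge> 2" and t: "t > 0" and lam: "lam > 0" and a: "0 < a" "a \<le> 1/2"
  defines "lc \<equiv> 1/(T-1)"
  defines "c \<equiv> sqrt (lc * t / 2)"
  defines "w \<equiv> c * ln (lam*(T-1)) / (1 + lc)"
  shows "norm (integral {1 - 1/T .. 1 - (1-a)/T}
          (\<lambda>z. complex_of_real ((1 - z) powr (-1/2)) *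
               exp (\<i> * complex_of_real t * F (complex_of_real z) lam))
       - exp (\<i> * complex_of_real t * F (complex_of_real (1 - 1/T)) lam - \<i> * complex_of_real (w\<^sup>2))
         * complex_of_real (t powr (-1/2) * sqrt (2 / (1 + lc)))
         * integral {w .. w + a * c} (\<lambda>\<xi>. exp (\<i> * complex_of_real (\<xi>\<^sup>2))))
       \<le> (1/sqrt T) * (a^2 + 2*t*a^4/T)"
proof -
  define z0 where "z0 = 1 - 1/T"
  define z1 where "z1 = 1 - (1-a)/T"
  define G where "G = (\<lambda>x::real. (1-x)*ln(1-x) + x*ln x + x*ln lam)"
  define m where "m = c * T"
  define g where "g = (\<lambda>\<xi>::real. exp (\<i> * complex_of_real (\<xi>\<^sup>2)))"
  define K where "K = exp (\<i> * complex_of_real t * F (complex_of_real z0) lam - \<i> * complex_of_real (w\<^sup>2))"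
  define s where "s = t powr (-1/2) * sqrt (2 / (1 + lc))"
  have Tp: "T > 0" "T - 1 > 0" using T by auto
  have lcp: "lc > 0" unfolding lc_def using Tp by simp
  have cp: "c > 0" unfolding c_def using lcp t by simp
  have mp: "m > 0" unfolding m_def using cp Tp by simp
  have z01: "z1 = z0 + a/T" unfolding z0_def z1_def using Tp by (simp add: field_simps)
  have z0z1: "z0 \<le> z1" using z01 a Tp by simp
  have z1b: "z1 \<le> 1 - 1/(2*T)" unfolding z1_def using a Tp by (simp add: field_simps)
  have z0h: "1/2 \<le> z0" unfolding z0_def using T by (simp add: field_simps)
  have inr: "0 < x \<and> x < 1" if "x \<in> {z0..z1}" for x
  proof -
    have p: "0 < 1/(2*T)" using Tp by simp
    have "z0 \<le> x" "x \<le> z1" using that by auto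
    then show ?thesis using p z0h z1b by linarith
  qed
  define f where "f = (\<lambda>x::real. complex_of_real (1/sqrt(1-x)) * exp (\<i> * complex_of_real (t * G x)))"
  have feq: "complex_of_real ((1 - x) powr (-1/2)) * exp (\<i> * complex_of_real t * F (complex_of_real x) lam) = f x"
    if "x \<in> {z0..z1}" for x
  proof -
    have x: "0 < x" "x < 1" using inr[OF that] by auto
    have "(1 - x) powr (-1/2) = 1/sqrt(1-x)"
      using x by (simp add: powr_minus_divide powr_half_sqrt)
    then show ?thesis unfolding f_def G_def using F_real[OF x lam] by (simp add: mult.assoc)
  qed
  have J: "integral {z0..z1} (\<lambda>z. complex_of_real ((1 - z) powr (-1/2)) *
               exp (\<i> * complex_of_real t * F (complex_of_real z) lam)) = integral {z0..z1} f"
    by (rule integral_cong) (use feq in auto)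
  have fcont: "continuous_on {z0..z1} f"
  proof -
    have "continuous_on {z0..z1} (\<lambda>x. 1/sqrt(1-x))"
      by (intro continuous_intros) (use inr in force)
    moreover have "continuous_on {z0..z1} G"
      unfolding G_def by (intro continuous_intros) (use inr in force)+
    ultimately show ?thesis unfolding f_def
      by (intro continuous_on_mult continuous_on_of_real continuous_on_exp continuous_on_const continuous_on_id) auto
  qed
  have gcont: "continuous_on UNIV g" unfolding g_def by (intro continuous_intros)
  have gint: "(g has_integral integral {w..w + a*c} g) (cbox w (w + a*c))"
    using integrable_continuous_interval[OF continuous_on_subset[OF gcont]] by auto
  have e1: "(w - (w - m*z0)) /\<^sub>R m = z0" using mp by simp
  have e2: "(w + a*c - (w - m*z0)) /\<^sub>R m = z1"
    unfolding z01 m_def using cp Tp by (simp add: field_simps)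
  have hI: "((\<lambda>x. g (m *\<^sub>R x + (w - m*z0))) has_integral (integral {w..w + a*c} g /\<^sub>R m ^ DIM(real)))
        (cbox z0 z1)"
    using has_integral_affinity'[OF gint mp, of "w - m*z0"] unfolding e1 e2 .
  then have hI: "((\<lambda>x. g (m * x + (w - m*z0))) has_integral (integral {w..w + a*c} g /\<^sub>R m)) {z0..z1}"
    by simp
  have Ieq: "integral {w..w + a*c} g = complex_of_real m * integral {z0..z1} (\<lambda>x. g (m * x + (w - m*z0)))"
    using integral_unique[OF hI] mp by (simp add: scaleR_conv_of_real field_simps)
  define h where "h = (\<lambda>x. K * complex_of_real s * complex_of_real m * g (m * x + (w - m*z0)))"
  have M: "K * complex_of_real s * integral {w..w + a*c} g = integral {z0..z1} h"
    unfolding Ieq h_def by (simp add: mult.assoc)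
  have hcont: "continuous_on {z0..z1} h"
    unfolding h_def g_def by (intro continuous_intros)
  have diff: "integral {z0..z1} f - integral {z0..z1} h = integral {z0..z1} (\<lambda>x. f x - h x)"
    by (rule integral_diff[symmetric])
       (auto intro!: integrable_continuous_interval fcont hcont)
  have c2: "c^2 = lc * t / 2" unfolding c_def using lcp t by simp
  have lc1: "1 + lc = T/(T-1)" unfolding lc_def using Tp by (simp add: field_simps)
  have sm: "s * m = sqrt T"
  proof -
    have "s * m = (1/sqrt t) * (sqrt (2 / (1 + lc)) * sqrt (lc * t / 2)) * T"
      unfolding s_def m_def c_def using t by (simp add: powr_minus_divide powr_half_sqrt)
    also have "sqrt (2 / (1 + lc)) * sqrt (lc * t / 2) = sqrt (t / T)"
      unfolding real_sqrt_mult[symmetric] lc1 unfolding lc_def using Tp by (simp add: field_simps)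
    also have "(1/sqrt t) * sqrt (t / T) * T = sqrt T"
      using t Tp by (simp add: real_sqrt_divide field_simps)
    finally show ?thesis .
  qed
  have lnid: "ln (1 - 1/T) - ln (1/T) + ln lam = ln (lam*(T-1))"
  proof -
    have "1 - 1/T = (T-1)/T" using Tp by (simp add: field_simps)
    then show ?thesis using Tp lam by (simp add: ln_div ln_mult)
  qed
  have ph1: "2 * m * w = t * (ln (1 - 1/T) - ln (1/T) + ln lam)"
  proof -
    have "2 * m * w = 2 * c^2 * T * ln (lam*(T-1)) / (1 + lc)"
      unfolding m_def w_def by (simp add: power2_eq_square)
    also have "\<dots> = t * ln (lam*(T-1))" unfolding c2 lc1 unfolding lc_def using Tp by (simp add: field_simps)
    finally show ?thesis unfolding lnid .
  qed
  have ph2: "m^2 = t * (T^2/(T-1)/2)"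
    unfolding m_def power_mult_distrib c2 lc_def using Tp by (simp add: field_simps)
  define B where "B = sqrt T * (a + 2*t*a^3/T)"
  have pw: "norm (f x - h x) \<le> B" if x: "x \<in> {z0..z1}" for x
  proof -
    have hx: "h x = complex_of_real (sqrt T) * exp (\<i> * complex_of_real (t * G z0 - w^2 + (m * x + (w - m*z0))^2))"
    proof -
      have x0: "0 < z0" "z0 < 1" using inr[of z0] z0z1 by auto
      have "K = exp (\<i> * complex_of_real (t * G z0 - w^2))"
        unfolding K_def F_real[OF x0 lam] G_def by (simp add: algebra_simps)
      then show ?thesis unfolding h_def g_def
        by (simp add: sm[symmetric] algebra_simps exp_add[symmetric])
    qed
    have xr: "z0 \<le> x" "x \<le> z1" using x by auto
    define u where "u = T * (x - z0)"
    have u0: "0 \<le> u" unfolding u_def using xr Tp by simp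
    have ua: "u \<le> a" unfolding u_def using xr z01 Tp by (simp add: field_simps)
    have omx: "1 - x = (1 - u)/T" unfolding u_def z0_def using Tp by (simp add: field_simps)
    have r: "1/sqrt(1-x) = sqrt T / sqrt (1 - u)" unfolding omx by (simp add: real_sqrt_divide)
    have su: "0 < sqrt (1 - u)" "sqrt (1 - u) \<le> 1" using u0 ua a by auto
    have L1: "sqrt T \<le> sqrt T / sqrt (1 - u)" using su Tp by (simp add: le_divide_eq)
    have L2: "sqrt T / sqrt (1 - u) \<le> sqrt T * (1 + u)"
    proof -
      have am: "1/sqrt(1-u) \<le> 1+u" using amp[OF u0] ua a by simp
      have "sqrt T * (1/sqrt(1-u)) \<le> sqrt T * (1+u)" using Tp by (intro mult_left_mono[OF am]) auto
      then show ?thesis by simp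
    qed
    have A1: "\<bar>1/sqrt(1-x) - sqrt T\<bar> \<le> sqrt T * a"
    proof -
      have "sqrt T * u \<le> sqrt T * a" using ua Tp by (intro mult_left_mono) auto
      then show ?thesis using L1 L2 unfolding r by (simp add: algebra_simps)
    qed
    have ta: "\<bar>((1-x)*ln(1-x) + x*ln x + x*ln lam) - ((1/T)*ln(1/T) + (1-1/T)*ln(1-1/T) + (1-1/T)*ln lam)
      - (ln (1-1/T) - ln (1/T) + ln lam) * (x - (1-1/T)) - (T^2/(T-1))/2 * (x - (1-1/T))^2\<bar>
      \<le> 2 * T^2 * (x - (1-1/T))^3"
      by (rule taylorG[OF T lam]) (use xr z1b in \<open>auto simp: z0_def\<close>)
    have Gz0: "G z0 = (1/T)*ln(1/T) + (1-1/T)*ln(1-1/T) + (1-1/T)*ln lam" unfolding G_def z0_def by simp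
    have "t * G x - (t * G z0 - w^2 + (m * x + (w - m*z0))^2)
        = t * (G x - G z0 - (ln (1-1/T) - ln (1/T) + ln lam) * (x - z0) - (T^2/(T-1))/2 * (x - z0)^2)"
    proof -
      have "(m * x + (w - m*z0))^2 = w^2 + 2*m*w*(x - z0) + m^2 * (x-z0)^2"
        by (simp add: power2_eq_square algebra_simps)
      then have "t * G x - (t * G z0 - w^2 + (m * x + (w - m*z0))^2)
          = t * G x - t * G z0 - (2*m*w)*(x-z0) - m^2*(x-z0)^2" by simp
      also have "\<dots> = t * G x - t * G z0 - (t * (ln (1 - 1/T) - ln (1/T) + ln lam))*(x-z0)
           - (t * (T^2/(T-1)/2))*(x-z0)^2" by (simp only: ph1 ph2)
      finally show ?thesis by (simp add: algebra_simps)
    qed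
    then have "\<bar>t * G x - (t * G z0 - w^2 + (m * x + (w - m*z0))^2)\<bar> \<le> t * (2 * T^2 * (x - z0)^3)"
      using ta t unfolding Gz0 unfolding G_def z0_def by (simp add: abs_mult mult_left_mono)
    also have "\<dots> \<le> t * (2 * T^2 * (a/T)^3)"
    proof -
      have "x - z0 \<le> a/T" using xr z01 by simp
      then have "(x - z0)^3 \<le> (a/T)^3" using xr by (intro power_mono) auto
      then show ?thesis using t by (intro mult_left_mono) auto
    qed
    also have "\<dots> = 2*t*a^3/T" using Tp by (simp add: field_simps power3_eq_cube power2_eq_square)
    finally have A2: "\<bar>t * G x - (t * G z0 - w^2 + (m * x + (w - m*z0))^2)\<bar> \<le> 2*t*a^3/T" .
    have "norm (f x - h x) \<le> \<bar>1/sqrt(1-x) - sqrt T\<bar> + \<bar>sqrt T\<bar> * \<bar>t * G x - (t * G z0 - w^2 + (m * x + (w - m*z0))^2)\<bar>"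
      unfolding hx f_def by (rule expdiff)
    also have "\<dots> \<le> sqrt T * a + \<bar>sqrt T\<bar> * (2*t*a^3/T)"
      by (rule add_mono[OF A1 mult_left_mono[OF A2 abs_ge_zero]])
    finally show ?thesis unfolding B_def using Tp by (simp add: algebra_simps)
  qed
  have Bp: "0 \<le> B" unfolding B_def using a t Tp by simp
  have "norm (integral {z0..z1} (\<lambda>x. f x - h x)) \<le> B * (z1 - z0)"
    using has_integral_bound[OF Bp, of "\<lambda>x. f x - h x" _ z0 z1] pw z0z1
    by (auto intro!: integrable_integral integrable_continuous_interval continuous_on_diff fcont hcont)
  moreover have "B * (z1 - z0) = (1/sqrt T) * (a^2 + 2*t*a^4/T)"
  proof -
    have "sqrt T / T = 1 / sqrt T" using Tp by (simp add: field_simps real_sqrt_mult[symmetric])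
    moreover have "B * (z1 - z0) = (sqrt T / T) * (a^2 + 2*t*a^4/T)"
      unfolding B_def z01 using Tp by (simp add: field_simps eval_nat_numeral)
    ultimately show ?thesis by simp
  qed
  moreover have "integral {1 - 1/T .. 1 - (1-a)/T}
          (\<lambda>z. complex_of_real ((1 - z) powr (-1/2)) *
               exp (\<i> * complex_of_real t * F (complex_of_real z) lam))
       - exp (\<i> * complex_of_real t * F (complex_of_real (1 - 1/T)) lam - \<i> * complex_of_real (w\<^sup>2))
         * complex_of_real (t powr (-1/2) * sqrt (2 / (1 + lc)))
         * integral {w .. w + a * c} (\<lambda>\<xi>. exp (\<i> * complex_of_real (\<xi>\<^sup>2)))
      = integral {z0..z1} (\<lambda>x. f x - h x)" (is "?L = _")
  proof -
    have "?L = integral {z0..z1} (\<lambda>z. complex_of_real ((1 - z) powr (-1/2)) *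
               exp (\<i> * complex_of_real t * F (complex_of_real z) lam)) - K * complex_of_real s * integral {w..w + a*c} g"
      unfolding K_def s_def g_def z0_def z1_def by (rule refl)
    also have "\<dots> = integral {z0..z1} f - integral {z0..z1} h" unfolding J M ..
    finally show ?thesis unfolding diff .
  qed
  ultimately show ?thesis by simp
qed

theorem lemma4p8:
  fixes \<delta> :: real and a lam :: "real \<Rightarrow> real"
  assumes "0 < \<delta>" "\<delta> < 1"
    and "eventually (\<lambda>t. lam_c \<delta> t \<le> lam t \<and> lam t \<le> t powr (1 - \<delta>) - 1) at_top"
    and "eventually (\<lambda>t. 0 < a t) at_top"
    and "((\<lambda>t. t powr (-\<delta>/2) / a t) \<longlongrightarrow> 0) at_top"
    and "((\<lambda>t. a t / t powr (-\<delta>/3)) \<longlongrightarrow> 0) at_top"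
  shows "\<exists>C. eventually (\<lambda>t.
     norm (J_B1 \<delta> (a t) t (lam t)
       - exp (\<i> * complex_of_real t * F (complex_of_real (1 - t powr (\<delta> - 1))) (lam t)
              - \<i> * complex_of_real ((omega \<delta> t (lam t))\<^sup>2))
         * complex_of_real (t powr (-1/2) * sqrt (2 / (1 + lam_c \<delta> t)))
         * integral {omega \<delta> t (lam t) .. omega \<delta> t (lam t) + a t * sqrt (lam_c \<delta> t * t / 2)}
             (\<lambda>\<xi>. exp (\<i> * complex_of_real (\<xi>\<^sup>2))))
     \<le> C * (t powr (-1/2 + 3 * \<delta> / 2) * (a t) ^ 4)) at_top"
proof -
  have d1: "1 - \<delta> > 0" using assms(2) by simp
  have e1: "eventually (\<lambda>t. t \<ge> max 1 (2 powr (1/(1-\<delta>)))) at_top" by (rule eventually_ge_at_top)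
  have e2: "eventually (\<lambda>t. t powr (-\<delta>/2) / a t < 1) at_top"
    by (rule order_tendstoD(2)[OF assms(5)]) simp
  have e3: "eventually (\<lambda>t. a t / t powr (-\<delta>/3) < 1/2) at_top"
    by (rule order_tendstoD(2)[OF assms(6)]) simp
  have "eventually (\<lambda>t.
     norm (J_B1 \<delta> (a t) t (lam t)
       - exp (\<i> * complex_of_real t * F (complex_of_real (1 - t powr (\<delta> - 1))) (lam t)
              - \<i> * complex_of_real ((omega \<delta> t (lam t))\<^sup>2))
         * complex_of_real (t powr (-1/2) * sqrt (2 / (1 + lam_c \<delta> t)))
         * integral {omega \<delta> t (lam t) .. omega \<delta> t (lam t) + a t * sqrt (lam_c \<delta> t * t / 2)}
             (\<lambda>\<xi>. exp (\<i> * complex_of_real (\<xi>\<^sup>2))))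
     \<le> 3 * (t powr (-1/2 + 3 * \<delta> / 2) * (a t) ^ 4)) at_top"
    using e1 e2 e3 assms(3) assms(4)
  proof eventually_elim
    case (elim t)
    define T where "T = t powr (1 - \<delta>)"
    define A where "A = a t"
    define L where "L = lam t"
    have t1: "t \<ge> 1" "t \<ge> 2 powr (1/(1-\<delta>))" using elim(1) by auto
    have tp: "t > 0" using t1 by simp
    have hT: "T \<ge> 2"
    proof -
      have "(2 powr (1/(1-\<delta>))) powr (1-\<delta>) \<le> t powr (1-\<delta>)"
        using t1 d1 by (intro powr_mono2) auto
      then show ?thesis unfolding T_def powr_powr using d1 by simp
    qed
    have Ap: "A > 0" using elim(5) unfolding A_def .
    have eps: "t powr (\<delta> - 1) = 1/T"
      unfolding T_def using powr_minus_divide[of t "1 - \<delta>"] by simp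
    have lc: "lam_c \<delta> t = 1/(T-1)" unfolding lam_c_def T_def ..
    have Lp: "L > 0"
    proof -
      have "lam_c \<delta> t > 0" unfolding lc using hT by simp
      then show ?thesis using elim(4) unfolding L_def by simp
    qed
    have om: "omega \<delta> t L = sqrt (1/(T-1) * t / 2) * ln (L*(T-1)) / (1 + 1/(T-1))"
    proof -
      have "1 + Lam \<delta> t L = L*(T-1)" unfolding Lam_def lc using hT by (simp add: field_simps)
      then show ?thesis unfolding omega_def lc by simp
    qed
    have kk: "kk \<delta> t A = (1 - A)/T" unfolding kk_def eps by simp
    have A2: "A \<le> 1/2"
    proof -
      have "1 \<le> t powr (\<delta>/3)" using t1 assms(1) by (intro ge_one_powr_ge_zero) auto
      then have q: "t powr (-\<delta>/3) \<le> 1" using powr_minus_divide[of t "\<delta>/3"] by (simp add: divide_le_eq)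
      have "A < 1/2 * t powr (-\<delta>/3)" using elim(3) tp unfolding A_def by (simp add: divide_less_eq)
      then show ?thesis using q by simp
    qed
    have core': "norm (J_B1 \<delta> A t L
       - exp (\<i> * complex_of_real t * F (complex_of_real (1 - t powr (\<delta> - 1))) L
              - \<i> * complex_of_real ((omega \<delta> t L)\<^sup>2))
         * complex_of_real (t powr (-1/2) * sqrt (2 / (1 + lam_c \<delta> t)))
         * integral {omega \<delta> t L .. omega \<delta> t L + A * sqrt (lam_c \<delta> t * t / 2)}
             (\<lambda>\<xi>. exp (\<i> * complex_of_real (\<xi>\<^sup>2))))
       \<le> (1/sqrt T) * (A^2 + 2*t*A^4/T)"
      unfolding J_B1_def kk eps om lc by (rule core[OF hT tp Lp Ap A2])
    define P where "P = t powr \<delta>"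
    have Pp: "P > 0" unfolding P_def using tp by simp
    have tT: "t / T = P" unfolding T_def P_def using tp powr_diff[of t 1 "1-\<delta>"] by simp
    have sT: "1/sqrt T * P = t powr (-1/2 + 3 * \<delta> / 2)"
    proof -
      have "sqrt T = T powr (1/2)" using hT by (simp add: powr_half_sqrt)
      also have "\<dots> = t powr ((1-\<delta>)/2)" unfolding T_def powr_powr by simp
      finally have "sqrt T = t powr ((1-\<delta>)/2)" .
      then have "1/sqrt T * P = t powr \<delta> / t powr ((1-\<delta>)/2)" unfolding P_def by simp
      also have "\<dots> = t powr (\<delta> - (1-\<delta>)/2)" by (simp add: powr_diff)
      finally show ?thesis by (simp add: field_simps)
    qed
    have PA: "1 \<le> P * A^2"
    proof -
      have q: "t powr (-\<delta>/2) < A" using elim(2) Ap unfolding A_def by (simp add: divide_less_eq)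
      have q0: "0 \<le> t powr (-\<delta>/2)" by simp
      have "(t powr (-\<delta>/2))^2 \<le> A^2" using q q0 by (intro power_mono) auto
      moreover have "(t powr (-\<delta>/2))^2 = 1/P"
      proof -
        have "(t powr (-\<delta>/2))^2 = t powr (-\<delta>/2) * t powr (-\<delta>/2)" by (simp add: power2_eq_square)
        also have "\<dots> = t powr (-\<delta>)" by (simp flip: powr_add)
        also have "\<dots> = 1/P" unfolding P_def by (rule powr_minus_divide)
        finally show ?thesis .
      qed
      ultimately have "1/P \<le> A^2" by simp
      then show ?thesis using Pp by (simp add: divide_le_eq mult.commute)
    qed
    have "A^2 \<le> P * A^4"
    proof -
      have "A^2 * 1 \<le> A^2 * (P * A^2)" using PA by (intro mult_left_mono) auto
      then show ?thesis by (simp add: algebra_simps eval_nat_numeral)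
    qed
    moreover have "2*t*A^4/T = 2*P*A^4"
    proof -
      have "2*t*A^4/T = 2*(t/T)*A^4" by simp
      then show ?thesis unfolding tT .
    qed
    ultimately have "A^2 + 2*t*A^4/T \<le> 3 * P * A^4" by simp
    then have "(1/sqrt T) * (A^2 + 2*t*A^4/T) \<le> (1/sqrt T) * (3 * P * A^4)"
      using hT by (intro mult_left_mono) auto
    also have "\<dots> = 3 * (t powr (-1/2 + 3 * \<delta> / 2) * A^4)" unfolding sT[symmetric] by simp
    finally show ?case using core' unfolding A_def L_def by linarith
  qed
  then show ?thesis by blast
qed

end
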